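(* Let $P\subset\mathbb{R}^N$ be a polytope with vertex set $\{v_1,\dots,v_M\}$, and let $v:\mathbb{R}^N\to\{v_1,\dots,v_M\}$ assign to each $x$ a vertex of $P$ closest to $x$ in Euclidean norm (with some fixed tie-breaking rule). Let $m\ge 1$, let $(\gamma(k))_{k\ge 1}$ be an arbitrary sequence of points of $P$, and for each $k\ge 0$ let $(w^k_1,\dots,w^k_m)$ be a probability vector ($w^k_i\ge 0$, $\sum_{i=1}^m w^k_i=1$). Let $\varepsilon(1-m),\dots,\varepsilon(0)\in\mathbb{R}^N$ be arbitrary initial values, and for $k\ge 0$ define recursively $$\varepsilon(k+1)=\Big[\sum_{i=1}^m w^k_i\,\varepsilon(k+1-i)\Big]+\gamma(k+1)-V(k+1),$$ where $V(k+1)$ is the vertex of $P$ minimizing $\|\varepsilon(k+1)\|$ with the tie-breaking rule, i.e. $V(k+1)=v\big(\sum_{i=1}^m w^k_i\varepsilon(k+1-i)+\gamma(k+1)\big)$. Then there exists $B>0$ such that $\|\varepsilon(k)\|<B$ for all $k$.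
   Context: This is the "general error diffusion" scheme; $\|\cdot\|$ is the Euclidean norm. *)

theory Defs
  imports "HOL-Analysis.Analysis"
begin

end

theory Submission
  imports Defs
begin


definition hcone :: "'a::euclidean_space set \<Rightarrow> 'a set" where
  "hcone B = {q. \<forall>b\<in>B. inner q b \<le> 0}"

lemma hcone_closed: "closed (hcone B)"
proof -
  have "hcone B = (\<Inter>b\<in>B. {q. inner b q \<le> 0})"
    by (auto simp: hcone_def inner_commute)
  then show ?thesis by (simp add: closed_INT closed_halfspace_le)
qed

lemma hcone_convex: "convex (hcone B)"
proof -
  have "hcone B = (\<Inter>b\<in>B. {q. inner b q \<le> 0})"
    by (auto simp: hcone_def inner_commute)
  then show ?thesis by (simp add: convex_INT convex_halfspace_le)
qed

lemma hcone_zero: "0 \<in> hcone B" by (simp add: hcone_def)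

lemma hcone_scale: "q \<in> hcone B \<Longrightarrow> 0 \<le> c \<Longrightarrow> c *\<^sub>R q \<in> hcone B"
  by (auto simp: hcone_def mult_nonneg_nonpos)

lemma hcone_add: "q \<in> hcone B \<Longrightarrow> r \<in> hcone B \<Longrightarrow> q + r \<in> hcone B"
  by (auto simp: hcone_def inner_add_left add_nonpos_nonpos)

lemma hcone_ne: "hcone B \<noteq> {}" using hcone_zero by blast

lemma pr_in: "closest_point (hcone B) e \<in> hcone B"
  by (simp add: closest_point_in_set hcone_closed hcone_ne)

lemma pr_dot: "z \<in> hcone B \<Longrightarrow> inner (e - closest_point (hcone B) e) (z - closest_point (hcone B) e) \<le> 0"
  by (simp add: closest_point_dot hcone_closed hcone_convex)

lemma pr_orth: "inner (e - closest_point (hcone B) e) (closest_point (hcone B) e) = 0"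
proof -
  let ?p = "closest_point (hcone B) e"
  have "inner (e - ?p) (0 - ?p) \<le> 0" by (rule pr_dot[OF hcone_zero])
  moreover have "inner (e - ?p) (2 *\<^sub>R ?p - ?p) \<le> 0"
    by (rule pr_dot[OF hcone_scale[OF pr_in]]) simp
  ultimately show ?thesis by (simp add: algebra_simps inner_diff_right)
qed

lemma pr_polar: "z \<in> hcone B \<Longrightarrow> inner (e - closest_point (hcone B) e) z \<le> 0"
proof -
  let ?p = "closest_point (hcone B) e"
  assume z: "z \<in> hcone B"
  have "inner (e - ?p) ((z + ?p) - ?p) \<le> 0" by (rule pr_dot[OF hcone_add[OF z pr_in]])
  then show ?thesis by simp
qed

lemma sq_add_aux: "(norm ((a::'a::real_inner) + b))\<^sup>2 = (norm a)\<^sup>2 + (norm b)\<^sup>2 + 2 * inner a b"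
  by (simp add: power2_norm_eq_inner inner_add_left inner_add_right inner_commute)

lemma pr_pyth: "(norm (closest_point (hcone B) e))\<^sup>2 + (norm (e - closest_point (hcone B) e))\<^sup>2 = (norm e)\<^sup>2"
proof -
  let ?p = "closest_point (hcone B) e"
  have "(norm (?p + (e - ?p)))\<^sup>2 = (norm ?p)\<^sup>2 + (norm (e - ?p))\<^sup>2 + 2 * inner ?p (e - ?p)"
    by (rule sq_add_aux)
  moreover have "inner ?p (e - ?p) = 0" using pr_orth by (simp add: inner_commute)
  ultimately show ?thesis by simp
qed

lemma pr_upper: "q \<in> hcone B \<Longrightarrow> norm q \<le> 1 \<Longrightarrow> inner e q \<le> norm (closest_point (hcone B) e)"
proof -
  let ?p = "closest_point (hcone B) e"
  assume q: "q \<in> hcone B" "norm q \<le> 1"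
  have "inner e q = inner ?p q + inner (e - ?p) q" by (simp add: inner_diff_left)
  also have "\<dots> \<le> inner ?p q" using pr_polar[OF q(1)] by simp
  also have "\<dots> \<le> norm ?p * norm q" by (rule norm_cauchy_schwarz)
  also have "\<dots> \<le> norm ?p" using q(2) by (simp add: mult_left_le)
  finally show ?thesis .
qed

lemma pr_attain: "\<exists>q\<in>hcone B. norm q \<le> 1 \<and> inner e q = norm (closest_point (hcone B) e)"
proof (cases "closest_point (hcone B) e = 0")
  case True then show ?thesis using hcone_zero by force
next
  case False
  let ?p = "closest_point (hcone B) e"
  let ?q = "(1 / norm ?p) *\<^sub>R ?p"
  have "?q \<in> hcone B" by (rule hcone_scale[OF pr_in]) simp
  moreover have "norm ?q \<le> 1" using False by simp
  moreover have "inner e ?p = inner ?p ?p"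
    using pr_orth[of e B] by (simp add: inner_diff_left)
  then have "inner e ?q = norm ?p"
    using False by (simp add: power2_norm_eq_inner[symmetric] power2_eq_square)
  ultimately show ?thesis by blast
qed

lemma pr_norm_le: "norm (closest_point (hcone B) e) \<le> norm e"
  using pr_pyth[of B e] by (smt (verit) norm_ge_zero power2_le_imp_le zero_le_power2)

lemma pr_dist_le: "p \<in> hcone B \<Longrightarrow> norm (e - closest_point (hcone B) e) \<le> norm (e - p)"
  using closest_point_le[OF hcone_closed, of p B e] by (simp add: dist_norm)

lemma hoff_base:
  fixes B :: "'a::euclidean_space set"
  assumes fin: "finite B"
  obtains C0 where "C0 > 0" "\<And>x F. 0 \<le> F \<Longrightarrow> (\<forall>b\<in>B. inner x b \<le> F) \<Longrightarrow>
           (\<forall>b\<in>B. inner (closest_point (hcone B) x) b = 0) \<Longrightarrow>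
           norm (x - closest_point (hcone B) x) \<le> C0 * F"
proof -
  define S where "S = sphere (0::'a) 1 \<inter> (\<Inter>z\<in>hcone B. {y. inner z y \<le> 0})"
  define g where "g = (\<lambda>y::'a. \<Sum>b\<in>B. max 0 (inner y b))"
  have Spolar: "y \<in> S \<longleftrightarrow> norm y = 1 \<and> (\<forall>z\<in>hcone B. inner y z \<le> 0)" for y
    by (auto simp: S_def inner_commute)
  have ghom: "g (c *\<^sub>R y) = c * g y" if "0 \<le> c" for c y
  proof -
    have "max 0 (inner (c *\<^sub>R y) b) = c * max 0 (inner y b)" for b
      using that by (simp add: max_mult_distrib_left)
    then show ?thesis by (simp add: g_def sum_distrib_left)
  qed
  have gbound: "g y \<le> real (card B) * F" if "0 \<le> F" "\<forall>b\<in>B. inner y b \<le> F" for y F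
  proof -
    have "\<forall>b\<in>B. max 0 (inner y b) \<le> F" using that by auto
    then show ?thesis unfolding g_def by (intro sum_bounded_above) auto
  qed
  have key: "norm y \<le> C * g y"
    if "C > 0" "\<forall>u\<in>S. 1 \<le> C * g u" "\<forall>z\<in>hcone B. inner y z \<le> 0" for y C
  proof (cases "y = 0")
    case True then show ?thesis by (simp add: g_def)
  next
    case False
    let ?u = "(1 / norm y) *\<^sub>R y"
    have "?u \<in> S" using False that(3) by (simp add: Spolar divide_nonpos_nonneg)
    then have "1 \<le> C * g ?u" using that(2) by blast
    also have "g ?u = g y / norm y" using ghom[of "1 / norm y" y] by simp
    finally have "1 \<le> C * g y / norm y" by simp
    then show ?thesis using False by (simp add: field_simps)
  qed
  have pol: "\<forall>z\<in>hcone B. inner (x - closest_point (hcone B) x) z \<le> 0" for x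
    using pr_polar by blast
  have inner_eq: "inner (x - closest_point (hcone B) x) b = inner x b"
    if "inner (closest_point (hcone B) x) b = 0" for x b
    using that by (simp add: inner_diff_left)
  have "\<exists>C1>0. \<forall>y\<in>S. 1 \<le> C1 * g y"
  proof (cases "S = {}")
    case True then show ?thesis by (intro exI[of _ 1]) auto
  next
    case False
    have "compact S"
      unfolding S_def by (intro compact_Int_closed compact_sphere closed_INT) (auto intro: closed_halfspace_le)
    moreover have "continuous_on S g"
      unfolding g_def by (intro continuous_intros)
    ultimately obtain y0 where y0: "y0 \<in> S" "\<forall>y\<in>S. g y0 \<le> g y"
      using continuous_attains_inf[OF _ False] by blast
    have g0: "g y0 \<ge> 0" unfolding g_def by (intro sum_nonneg) auto
    have "g y0 \<noteq> 0"
    proof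
      assume "g y0 = 0"
      then have "\<forall>b\<in>B. max 0 (inner y0 b) = 0"
        using sum_nonneg_eq_0_iff[OF fin, of "\<lambda>b. max 0 (inner y0 b)"] by (simp add: g_def)
      then have "y0 \<in> hcone B" by (auto simp: hcone_def max_def split: if_splits)
      then have "inner y0 y0 \<le> 0" using y0(1) Spolar by blast
      then have "y0 = 0" using inner_gt_zero_iff[of y0] by linarith
      then show False using y0(1) Spolar by simp
    qed
    then have gpos: "g y0 > 0" using g0 by simp
    show ?thesis
    proof (intro exI[of _ "1 / g y0"] conjI ballI)
      fix y assume "y \<in> S"
      then have "g y0 \<le> g y" using y0(2) by blast
      then show "1 \<le> 1 / g y0 * g y" using gpos by (simp add: field_simps)
    qed (use gpos in simp)
  qed
  then obtain C1 where C1: "C1 > 0" "\<forall>y\<in>S. 1 \<le> C1 * g y" by blast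
  show ?thesis
  proof (rule that[of "C1 * (real (card B) + 1)"])
    show "C1 * (real (card B) + 1) > 0" using C1 by simp
  next
    fix x :: 'a and F :: real
    assume F: "0 \<le> F" and xb: "\<forall>b\<in>B. inner x b \<le> F"
      and pb: "\<forall>b\<in>B. inner (closest_point (hcone B) x) b = 0"
    let ?y = "x - closest_point (hcone B) x"
    have "norm ?y \<le> C1 * g ?y"
      by (rule key) (use C1 pol in auto)
    also have "g ?y \<le> real (card B) * F"
      using gbound[OF F] xb pb inner_eq by simp
    then have "C1 * g ?y \<le> C1 * (real (card B) * F)" using C1 by simp
    also have "\<dots> \<le> C1 * (real (card B) + 1) * F" using C1 F by (simp add: field_simps)
    finally show "norm ?y \<le> C1 * (real (card B) + 1) * F" .
  qed
qed

lemma active_closest: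
  fixes B :: "'a::euclidean_space set"
  assumes fin: "finite B"
    and z: "z \<in> hcone {b\<in>B. inner (closest_point (hcone B) x) b = 0}"
  shows "norm (x - closest_point (hcone B) x) \<le> norm (x - z)"
proof -
  let ?p = "closest_point (hcone B) x"
  define I where "I = {b\<in>B. inner ?p b = 0}"
  define J where "J = B - I"
  have pB: "?p \<in> hcone B" by (rule pr_in)
  have Jneg: "inner ?p b < 0" if "b \<in> J" for b
    using that pB by (force simp: J_def I_def hcone_def)
  define u where "u = Min (insert 1 ((\<lambda>b. - inner ?p b / (\<bar>inner (z - ?p) b\<bar> + 1)) ` J))"
  have finJ: "finite J" using fin by (simp add: J_def)
  have u_le1: "u \<le> 1" unfolding u_def using finJ by (intro Min_le) auto
  have pos: "0 < - inner ?p b / (\<bar>inner (z - ?p) b\<bar> + 1)" if "b \<in> J" for b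
    using Jneg[OF that] by (intro divide_pos_pos) auto
  have u_pos: "u > 0" unfolding u_def using finJ pos
    by (subst Min_gr_iff) auto
  have u_leb: "u \<le> - inner ?p b / (\<bar>inner (z - ?p) b\<bar> + 1)" if "b \<in> J" for b
    unfolding u_def using finJ that by (intro Min_le) auto
  define w where "w = ?p + u *\<^sub>R (z - ?p)"
  have "w \<in> hcone B"
    unfolding hcone_def mem_Collect_eq
  proof (intro ballI)
    fix b assume b: "b \<in> B"
    show "inner w b \<le> 0"
    proof (cases "b \<in> I")
      case True
      then have "inner ?p b = 0" by (simp add: I_def)
      moreover have "inner z b \<le> 0" using z True by (auto simp: hcone_def I_def)
      ultimately show ?thesis using u_pos
        by (simp add: w_def inner_add_left inner_diff_left mult_nonneg_nonpos)
    next
      case False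
      then have bJ: "b \<in> J" using b by (simp add: J_def)
      let ?a = "\<bar>inner (z - ?p) b\<bar>"
      have "u * inner (z - ?p) b \<le> u * ?a" using u_pos by (simp add: mult_left_mono)
      also have "\<dots> \<le> (- inner ?p b / (?a + 1)) * ?a"
        using u_leb[OF bJ] by (intro mult_right_mono) auto
      also have "\<dots> \<le> - inner ?p b"
      proof -
        have "?a / (?a + 1) \<le> 1" by simp
        then have "(- inner ?p b) * (?a / (?a + 1)) \<le> (- inner ?p b) * 1"
          using Jneg[OF bJ] by (intro mult_left_mono) auto
        then show ?thesis by simp
      qed
      finally show ?thesis by (simp add: w_def inner_add_left)
    qed
  qed
  then have "inner (x - ?p) (w - ?p) \<le> 0" by (rule pr_dot)
  then have "u * inner (x - ?p) (z - ?p) \<le> 0" by (simp add: w_def)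
  then have dot: "inner (x - ?p) (z - ?p) \<le> 0" using u_pos by (simp add: mult_le_0_iff)
  have "(norm (x - z))\<^sup>2 = (norm ((x - ?p) + (?p - z)))\<^sup>2" by simp
  also have "\<dots> = (norm (x - ?p))\<^sup>2 + (norm (?p - z))\<^sup>2 + 2 * inner (x - ?p) (?p - z)"
    by (rule sq_add_aux)
  also have "inner (x - ?p) (?p - z) = - inner (x - ?p) (z - ?p)"
    by (simp add: inner_diff_right)
  finally have "(norm (x - ?p))\<^sup>2 \<le> (norm (x - z))\<^sup>2"
    using dot zero_le_power2[of "norm (?p - z)"] by linarith
  then show ?thesis by (simp add: power2_le_iff_abs_le)
qed

definition hprop :: "'a::euclidean_space set \<Rightarrow> real \<Rightarrow> bool" where
  "hprop B C \<longleftrightarrow> C > 0 \<and> (\<forall>x F. 0 \<le> F \<longrightarrow> (\<forall>b\<in>B. inner x b \<le> F) \<longrightarrow>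
           norm (x - closest_point (hcone B) x) \<le> C * F)"

lemma hpropD: "hprop B C \<Longrightarrow> 0 \<le> F \<Longrightarrow> (\<forall>b\<in>B. inner x b \<le> F) \<Longrightarrow>
           norm (x - closest_point (hcone B) x) \<le> C * F"
  unfolding hprop_def by blast

lemma hprop_pos: "hprop B C \<Longrightarrow> C > 0"
  unfolding hprop_def by blast

lemma hoffman:
  fixes B :: "'a::euclidean_space set"
  assumes "finite B"
  shows "\<exists>C. hprop B C"
  using assms
proof (induction "card B" arbitrary: B rule: less_induct)
  case less
  have "\<forall>I\<in>{I. I \<subset> B}. \<exists>C. hprop I C"
  proof
    fix I assume "I \<in> {I. I \<subset> B}"
    then have IB: "I \<subset> B" by simp
    moreover have "finite I" using IB less.prems finite_subset by blast
    ultimately show "\<exists>C. hprop I C"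
      using less.hyps[of I, OF psubset_card_mono[OF less.prems IB]] by simp
  qed
  then have "\<exists>Cf. \<forall>I\<in>{I. I \<subset> B}. hprop I (Cf I)" by (rule bchoice)
  then obtain Cf where Cf: "\<forall>I\<in>{I. I \<subset> B}. hprop I (Cf I)" by (elim exE)
  have CfP: "Cf I > 0" if "I \<subset> B" for I using Cf that hprop_pos by blast
  obtain C0 where C0: "C0 > 0" and C0H: "\<And>x F. 0 \<le> F \<Longrightarrow> (\<forall>b\<in>B. inner x b \<le> F) \<Longrightarrow>
           (\<forall>b\<in>B. inner (closest_point (hcone B) x) b = 0) \<Longrightarrow>
           norm (x - closest_point (hcone B) x) \<le> C0 * F"
    by (rule hoff_base[OF less.prems]) (rule that)
  have finS: "finite {I. I \<subset> B}" by (rule finite_subset[of _ "Pow B"]) (use less.prems in auto)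
  define C where "C = C0 + sum Cf {I. I \<subset> B}"
  have sum_nn: "sum Cf {I. I \<subset> B} \<ge> 0" by (intro sum_nonneg) (simp add: CfP less_imp_le)
  have CfC: "Cf I \<le> C" if "I \<subset> B" for I
  proof -
    have "Cf I \<le> sum Cf {I. I \<subset> B}"
      using that finS by (intro member_le_sum) (auto simp: CfP less_imp_le)
    then show ?thesis using C0 by (simp add: C_def)
  qed
  have "hprop B C"
    unfolding hprop_def
  proof (intro conjI allI impI)
    show "C > 0" using C0 sum_nn by (simp add: C_def)
    fix x :: 'a and F :: real
    assume F: "0 \<le> F" and xb: "\<forall>b\<in>B. inner x b \<le> F"
    let ?p = "closest_point (hcone B) x"
    define I where "I = {b\<in>B. inner ?p b = 0}"
    show "norm (x - ?p) \<le> C * F"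
    proof (cases "I = B")
      case True
      then have "\<forall>b\<in>B. inner ?p b = 0" by (auto simp: I_def)
      then have "norm (x - ?p) \<le> C0 * F" using F xb by (intro C0H)
      also have "\<dots> \<le> C * F" using F sum_nn by (simp add: C_def mult_right_mono)
      finally show ?thesis .
    next
      case False
      then have IB: "I \<subset> B" by (auto simp: I_def)
      let ?q = "closest_point (hcone I) x"
      have "norm (x - ?p) \<le> norm (x - ?q)"
        using active_closest[OF less.prems, of ?q x] pr_in[of I x] by (simp add: I_def)
      also have "\<dots> \<le> Cf I * F"
        using IB F xb Cf by (intro hpropD[of I]) auto
      also have "\<dots> \<le> C * F" using CfC[OF IB] F by (simp add: mult_right_mono)
      finally show ?thesis .
    qed
  qed
  then show ?case by blast
qed




lemma lower_np:
  fixes E t n :: real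
  assumes "0 < E" "0 \<le> t" "t \<le> E" "0 \<le> n" "n\<^sup>2 = E\<^sup>2 - t\<^sup>2"
  shows "E - t\<^sup>2 / E \<le> n"
proof (cases "E - t\<^sup>2 / E \<le> 0")
  case True then show ?thesis using assms by linarith
next
  case False
  have tt: "t\<^sup>2 \<le> E\<^sup>2" using assms by (simp add: power_mono)
  have "(E - t\<^sup>2 / E)\<^sup>2 = E\<^sup>2 - 2 * t\<^sup>2 + (t\<^sup>2)\<^sup>2 / E\<^sup>2"
    using assms(1) by (simp add: power2_diff field_simps power2_eq_square)
  also have "(t\<^sup>2)\<^sup>2 / E\<^sup>2 \<le> t\<^sup>2"
  proof -
    have "(t\<^sup>2)\<^sup>2 \<le> t\<^sup>2 * E\<^sup>2" using tt by (simp add: power2_eq_square mult_left_mono)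
    then show ?thesis using assms(1) by (simp add: divide_le_eq)
  qed
  finally have "(E - t\<^sup>2 / E)\<^sup>2 \<le> n\<^sup>2" using assms(5) by linarith
  then show ?thesis using assms(4) False by (simp add: power2_le_iff_abs_le)
qed

lemma upper_np:
  fixes E s n :: real
  assumes "0 < E" "0 \<le> s" "s \<le> E" "0 \<le> n" "n\<^sup>2 = E\<^sup>2 - s\<^sup>2"
  shows "n \<le> E - s\<^sup>2 / (2 * E)"
proof -
  have ss: "s\<^sup>2 \<le> E\<^sup>2" using assms by (simp add: power_mono)
  have nonneg: "0 \<le> E - s\<^sup>2 / (2 * E)"
  proof -
    have "s\<^sup>2 / (2 * E) \<le> E\<^sup>2 / (2 * E)" using ss assms(1) by (simp add: divide_right_mono)
    also have "\<dots> = E / 2" using assms(1) by (simp add: power2_eq_square)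
    finally show ?thesis using assms(1) by linarith
  qed
  have "(E - s\<^sup>2 / (2 * E))\<^sup>2 = E\<^sup>2 - s\<^sup>2 + (s\<^sup>2)\<^sup>2 / (4 * E\<^sup>2)"
    using assms(1) by (simp add: power2_diff field_simps power2_eq_square)
  then have "n\<^sup>2 \<le> (E - s\<^sup>2 / (2 * E))\<^sup>2" using assms(5) by simp
  then show ?thesis using nonneg by (simp add: power2_le_iff_abs_le)
qed

lemma caseA_arith:
  fixes E t n' n0 a A :: real
  assumes "0 < E" "0 \<le> t" "t \<le> E" "0 \<le> n'" "n'\<^sup>2 = E\<^sup>2 - t\<^sup>2"
    and "t\<^sup>2 \<le> a * (A - 1) * E" "n0 \<le> E"
  shows "n0 + a \<le> n' + a * A"
proof -
  have "E - t\<^sup>2 / E \<le> n'" by (rule lower_np) (use assms in auto)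
  moreover have "t\<^sup>2 / E \<le> a * (A - 1)" using assms(1,6) by (simp add: divide_le_eq)
  ultimately show ?thesis using assms(7) by (simp add: algebra_simps)
qed

lemma caseB_arith:
  fixes E s c0 n0 nv a A C D :: real
  assumes E0: "0 < E" and s: "0 \<le> s" "s \<le> E" and c: "0 \<le> c0" "c0 \<le> E"
    and n0: "0 \<le> n0" "n0\<^sup>2 = E\<^sup>2 - s\<^sup>2" and nv: "0 \<le> nv" "nv\<^sup>2 = E\<^sup>2 - c0\<^sup>2"
    and a: "1 \<le> a" and A: "0 \<le> A" and sD: "(s + D)\<^sup>2 > 4 * a * E"
    and CD: "0 < C" "0 < D" "c0 \<le> C * D\<^sup>2" and EL: "3 * C\<^sup>2 * D^4 + 3 * D\<^sup>2 + 1 \<le> E"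
  shows "n0 + a \<le> nv + A"
proof -
  have c0sq: "c0\<^sup>2 \<le> C\<^sup>2 * D^4"
  proof -
    have "c0\<^sup>2 \<le> (C * D\<^sup>2)\<^sup>2" using c CD by (simp add: power_mono)
    then show ?thesis by (simp add: power_mult_distrib power2_eq_square[of "D\<^sup>2", symmetric] power_mult[symmetric])
  qed
  have aE: "E \<le> a * E" using a E0 by simp
  have big: "s\<^sup>2 \<ge> 2 * c0\<^sup>2 + 2 * a * E"
  proof (rule ccontr)
    assume "\<not> ?thesis"
    then have lt: "s\<^sup>2 < 2 * c0\<^sup>2 + 2 * a * E" by simp
    have "(s + D)\<^sup>2 \<le> 3 / 2 * s\<^sup>2 + 3 * D\<^sup>2"
    proof -
      have "0 \<le> (s / 2 - 2 * D / 2)\<^sup>2 * 2" by simp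
      then show ?thesis by (simp add: power2_eq_square algebra_simps)
    qed
    also have "\<dots> < 3 * c0\<^sup>2 + 3 * a * E + 3 * D\<^sup>2" using lt by simp
    also have "\<dots> \<le> 4 * a * E" using c0sq aE EL by (simp add: algebra_simps)
    finally show False using sD by simp
  qed
  have up: "n0 \<le> E - s\<^sup>2 / (2 * E)" by (rule upper_np) (use assms in auto)
  have lo: "E - c0\<^sup>2 / E \<le> nv" by (rule lower_np) (use assms in auto)
  have "a \<le> (s\<^sup>2 - 2 * c0\<^sup>2) / (2 * E)" using big E0 by (simp add: field_simps)
  also have "(s\<^sup>2 - 2 * c0\<^sup>2) / (2 * E) = s\<^sup>2 / (2 * E) - c0\<^sup>2 / E" using E0 by (simp add: field_simps)
  finally show ?thesis using up lo A by linarith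
qed


definition Bset :: "'a::euclidean_space set \<Rightarrow> 'a set \<Rightarrow> 'a set" where
  "Bset V W = (\<lambda>(u, w). u - w) ` (V \<times> W)"

definition NC :: "'a::euclidean_space set \<Rightarrow> 'a set \<Rightarrow> 'a set" where
  "NC V W = hcone (Bset V W)"

lemma NC_iff: "q \<in> NC V W \<longleftrightarrow> (\<forall>w\<in>W. \<forall>u\<in>V. inner q u \<le> inner q w)"
  by (auto simp: NC_def hcone_def Bset_def inner_diff_right)

lemma Bset_finite: "finite V \<Longrightarrow> W \<subseteq> V \<Longrightarrow> finite (Bset V W)"
  unfolding Bset_def by (intro finite_imageI finite_cartesian_product) (auto intro: finite_subset)

definition val :: "'a::euclidean_space set \<Rightarrow> real \<Rightarrow> 'a set \<Rightarrow> 'a \<Rightarrow> real" where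
  "val V A W e = norm (closest_point (NC V W) e) + A ^ card W"

definition Phi :: "'a::euclidean_space set \<Rightarrow> real \<Rightarrow> 'a \<Rightarrow> real" where
  "Phi V A e = Max ((\<lambda>W. val V A W e) ` Pow V)"

lemma Phi_ge: "finite V \<Longrightarrow> W \<subseteq> V \<Longrightarrow> val V A W e \<le> Phi V A e"
  unfolding Phi_def by (intro Max_ge) auto

lemma Phi_attained: "finite V \<Longrightarrow> \<exists>W\<subseteq>V. val V A W e = Phi V A e"
proof -
  assume "finite V"
  then have "Phi V A e \<in> (\<lambda>W. val V A W e) ` Pow V"
    unfolding Phi_def by (intro Max_in) auto
  then show ?thesis by auto
qed

lemma hprop_mono: "hprop B C \<Longrightarrow> C \<le> C' \<Longrightarrow> hprop B C'"
  unfolding hprop_def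
proof (intro conjI allI impI, goal_cases)
  case 1 then show ?case by simp
next
  case (2 x F)
  then have "norm (x - closest_point (hcone B) x) \<le> C * F" by blast
  also have "\<dots> \<le> C' * F" using 2 by (simp add: mult_right_mono)
  finally show ?case .
qed

lemma hoff_unif:
  fixes V :: "'a::euclidean_space set"
  assumes "finite V"
  shows "\<exists>C. C > 0 \<and> (\<forall>W\<subseteq>V. hprop (Bset V W) C)"
proof -
  have "\<forall>W\<in>Pow V. \<exists>C. hprop (Bset V W) C"
    using hoffman Bset_finite[OF assms] by blast
  then have "\<exists>Cf. \<forall>W\<in>Pow V. hprop (Bset V W) (Cf W)" by (rule bchoice)
  then obtain Cf where Cf: "\<forall>W\<in>Pow V. hprop (Bset V W) (Cf W)" by (elim exE)
  have pos: "W \<in> Pow V \<Longrightarrow> 0 < Cf W" for W using Cf hprop_pos by blast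
  define C where "C = 1 + sum Cf (Pow V)"
  have sn: "0 \<le> sum Cf (Pow V)" by (intro sum_nonneg) (simp add: pos less_imp_le)
  have le: "Cf W \<le> C" if "W \<subseteq> V" for W
  proof -
    have "Cf W \<le> sum Cf (Pow V)" using that assms by (intro member_le_sum) (auto simp: pos less_imp_le)
    then show ?thesis by (simp add: C_def)
  qed
  show ?thesis
  proof (intro exI[of _ C] conjI allI impI)
    show "C > 0" using sn by (simp add: C_def)
    fix W assume "W \<subseteq> V"
    then show "hprop (Bset V W) C" using Cf le hprop_mono by blast
  qed
qed


lemma key:
  fixes V :: "'a::euclidean_space set"
  assumes finV: "finite V" and vV: "v \<in> V"
    and C: "C > 0" "\<forall>W\<subseteq>V. hprop (Bset V W) C"
    and D: "D > 0" "\<forall>u\<in>V. \<forall>w\<in>V. norm (u - w) \<le> D"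
    and A: "1 \<le> A" "4 * C\<^sup>2 * D\<^sup>2 \<le> A - 1"
    and ev: "\<forall>u\<in>V. inner e (u - v) \<le> (norm (u - v))\<^sup>2 / 2"
    and EL: "3 * C\<^sup>2 * D^4 + 3 * D\<^sup>2 + 1 \<le> norm e"
  shows "\<exists>W\<subseteq>V. v \<in> W \<and> val V A W e = Phi V A e"
proof -
  obtain W0 where W0: "W0 \<subseteq> V" "val V A W0 e = Phi V A e" using Phi_attained[OF finV] by blast
  show ?thesis
  proof (cases "v \<in> W0")
    case True then show ?thesis using W0 by blast
  next
    case False
    define E where "E = norm e"
    have "0 \<le> 3 * C\<^sup>2 * D^4 + 3 * D\<^sup>2" by simp
    then have E0: "0 < E" using EL unfolding E_def by linarith
    define p0 where "p0 = closest_point (hcone (Bset V W0)) e"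
    define s where "s = norm (e - p0)"
    define W' where "W' = insert v W0"
    define p' where "p' = closest_point (hcone (Bset V W')) e"
    define t where "t = norm (e - p')"
    define pv where "pv = closest_point (hcone (Bset V {v})) e"
    define c0 where "c0 = norm (e - pv)"
    define k where "k = card W0"
    define a where "a = A ^ k"
    have finW0: "finite W0" using W0(1) finV finite_subset by blast
    have W'V: "W' \<subseteq> V" using W0(1) vV by (simp add: W'_def)
    have cardW': "card W' = k + 1" using False finW0 by (simp add: W'_def k_def)
    have a1: "1 \<le> a" unfolding a_def using A(1) by simp
    have py0: "(norm p0)\<^sup>2 = E\<^sup>2 - s\<^sup>2" using pr_pyth[of "Bset V W0" e] by (simp add: p0_def s_def E_def)
    have py': "(norm p')\<^sup>2 = E\<^sup>2 - t\<^sup>2" using pr_pyth[of "Bset V W'" e] by (simp add: p'_def t_def E_def)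
    have pyv: "(norm pv)\<^sup>2 = E\<^sup>2 - c0\<^sup>2" using pr_pyth[of "Bset V {v}" e] by (simp add: pv_def c0_def E_def)
    have le_E: "x \<le> E" if "(norm y)\<^sup>2 = E\<^sup>2 - x\<^sup>2" "0 \<le> x" for x y
    proof -
      have "x\<^sup>2 \<le> E\<^sup>2" using that(1) by (smt (verit) zero_le_power2)
      then show ?thesis using E0 that(2) by (simp add: power2_le_iff_abs_le)
    qed
    have sE: "s \<le> E" using le_E[OF py0] by (simp add: s_def)
    have tE: "t \<le> E" using le_E[OF py'] by (simp add: t_def)
    have cE: "c0 \<le> E" using le_E[OF pyv] by (simp add: c0_def)
    have n0E: "norm p0 \<le> E" using pr_norm_le[of "Bset V W0" e] by (simp add: p0_def E_def)
    have p0in: "p0 \<in> NC V W0" using pr_in[of "Bset V W0" e] by (simp add: p0_def NC_def)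
    have t_bound: "t \<le> C * (D * s + D\<^sup>2)"
    proof -
      have "norm (e - p') \<le> C * (D * s + D\<^sup>2)" unfolding p'_def
      proof (rule hpropD)
        show "hprop (Bset V W') C" using C(2) W'V by blast
        show "0 \<le> D * s + D\<^sup>2" using D(1) by (simp add: s_def)
        show "\<forall>b\<in>Bset V W'. inner e b \<le> D * s + D\<^sup>2"
        proof
          fix b assume "b \<in> Bset V W'"
          then obtain u w where uw: "u \<in> V" "w \<in> W'" "b = u - w" by (auto simp: Bset_def)
          show "inner e b \<le> D * s + D\<^sup>2"
          proof (cases "w = v")
            case True
            have "inner e b \<le> (norm (u - v))\<^sup>2 / 2" using ev uw True by simp
            also have "\<dots> \<le> D\<^sup>2 / 2" using D(2) uw(1) vV by (simp add: power_mono)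
            also have "\<dots> \<le> D * s + D\<^sup>2" using D(1) by (simp add: s_def)
            finally show ?thesis .
          next
            case False
            then have wW0: "w \<in> W0" using uw(2) by (simp add: W'_def)
            have "inner p0 u \<le> inner p0 w" using p0in wW0 uw(1) by (simp add: NC_iff)
            then have "inner p0 b \<le> 0" using uw(3) by (simp add: inner_diff_right)
            moreover have "inner (e - p0) b \<le> s * D"
            proof -
              have "inner (e - p0) b \<le> norm (e - p0) * norm b" by (rule norm_cauchy_schwarz)
              also have "\<dots> \<le> s * D" unfolding s_def
                using D(2) uw W0(1) wW0 by (intro mult_left_mono) auto
              finally show ?thesis .
            qed
            ultimately have "inner e b \<le> D * s"
              by (simp add: inner_diff_left algebra_simps)
            then show ?thesis by (simp add: add_increasing2)
          qed
        qed
      qed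
      then show ?thesis by (simp add: t_def)
    qed
    have c0_bound: "c0 \<le> C * D\<^sup>2"
    proof -
      have "norm (e - pv) \<le> C * D\<^sup>2" unfolding pv_def
      proof (rule hpropD)
        show "hprop (Bset V {v}) C" using C(2) vV by blast
        show "0 \<le> D\<^sup>2" by simp
        show "\<forall>b\<in>Bset V {v}. inner e b \<le> D\<^sup>2"
        proof
          fix b assume "b \<in> Bset V {v}"
          then obtain u where u: "u \<in> V" "b = u - v" by (auto simp: Bset_def)
          have "inner e b \<le> (norm (u - v))\<^sup>2 / 2" using ev u by simp
          also have "\<dots> \<le> D\<^sup>2 / 2" using D(2) u(1) vV by (simp add: power_mono)
          also have "\<dots> \<le> D\<^sup>2" by simp
          finally show "inner e b \<le> D\<^sup>2" .
        qed
      qed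
      then show ?thesis by (simp add: c0_def)
    qed
    have val0: "val V A W0 e = norm p0 + a" by (simp add: val_def NC_def p0_def a_def k_def)
    show ?thesis
    proof (cases "t\<^sup>2 \<le> a * (A - 1) * E")
      case True
      have "norm p0 + a \<le> norm p' + a * A"
        by (rule caseA_arith[OF E0 _ tE _ py' True n0E]) (simp_all add: t_def)
      moreover have "val V A W' e = norm p' + a * A"
        by (simp add: val_def NC_def p'_def cardW' a_def)
      ultimately have "Phi V A e \<le> val V A W' e" using W0(2) val0 by simp
      moreover have "val V A W' e \<le> Phi V A e" by (rule Phi_ge[OF finV W'V])
      ultimately show ?thesis using W'V by (intro exI[of _ W']) (auto simp: W'_def)
    next
      case False
      have "(s + D)\<^sup>2 > 4 * a * E"
      proof -
        have tt: "t\<^sup>2 \<le> (C * (D * s + D\<^sup>2))\<^sup>2"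
          using t_bound by (intro power_mono) (simp_all add: t_def)
        have "C\<^sup>2 * D\<^sup>2 * (4 * a * E) \<le> a * (A - 1) * E"
        proof -
          have "C\<^sup>2 * D\<^sup>2 * 4 \<le> A - 1" using A(2) by (simp add: algebra_simps)
          then have "C\<^sup>2 * D\<^sup>2 * 4 * (a * E) \<le> (A - 1) * (a * E)"
            using a1 E0 by (intro mult_right_mono) auto
          then show ?thesis by (simp add: algebra_simps)
        qed
        also have "\<dots> < t\<^sup>2" using False by simp
        also have "\<dots> \<le> (C * (D * s + D\<^sup>2))\<^sup>2" by (rule tt)
        also have "\<dots> = C\<^sup>2 * D\<^sup>2 * (s + D)\<^sup>2" by (simp add: power2_eq_square algebra_simps)
        finally have "C\<^sup>2 * D\<^sup>2 * (4 * a * E) < C\<^sup>2 * D\<^sup>2 * (s + D)\<^sup>2" .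
        then show ?thesis using C(1) D(1) by (simp add: mult_less_cancel_left_pos)
      qed
      then have "norm p0 + a \<le> norm pv + A"
        by (intro caseB_arith[OF E0 _ sE _ cE _ py0 _ pyv a1 _ _ C(1) D(1) c0_bound])
          (use A(1) EL in \<open>simp_all add: s_def c0_def E_def\<close>)
      moreover have "val V A {v} e = norm pv + A"
        by (simp add: val_def NC_def pv_def)
      ultimately have "Phi V A e \<le> val V A {v} e" using W0(2) val0 by simp
      moreover have "val V A {v} e \<le> Phi V A e" by (rule Phi_ge[OF finV]) (use vV in simp)
      ultimately show ?thesis using vV by (intro exI[of _ "{v}"]) auto
    qed
  qed
qed


lemma Bset_empty: "Bset V {} = {}" by (simp add: Bset_def)

lemma Phi_lower: "finite V \<Longrightarrow> norm e + 1 \<le> Phi V A e"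
proof -
  assume fin: "finite V"
  have "hcone (Bset V {}) = UNIV" by (simp add: Bset_empty hcone_def)
  then have "val V A {} e = norm e + 1" by (simp add: val_def NC_def closest_point_self)
  moreover have "val V A {} e \<le> Phi V A e" by (rule Phi_ge[OF fin]) simp
  ultimately show ?thesis by simp
qed

lemma Phi_upper: "finite V \<Longrightarrow> 1 \<le> A \<Longrightarrow> Phi V A e \<le> norm e + A ^ card V"
proof -
  assume fin: "finite V" and A: "1 \<le> A"
  obtain W where W: "W \<subseteq> V" "val V A W e = Phi V A e" using Phi_attained[OF fin] by blast
  have "norm (closest_point (NC V W) e) \<le> norm e" unfolding NC_def by (rule pr_norm_le)
  moreover have "A ^ card W \<le> A ^ card V" using A card_mono[OF fin W(1)] by (rule power_increasing[rotated])
  ultimately show ?thesis using W(2) by (simp add: val_def)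
qed

lemma hull_le: "g \<in> convex hull V \<Longrightarrow> \<forall>u\<in>V. inner q u \<le> c \<Longrightarrow> inner q g \<le> c"
proof -
  assume g: "g \<in> convex hull V" and V: "\<forall>u\<in>V. inner q u \<le> c"
  have "convex hull V \<subseteq> {y. inner q y \<le> c}"
    by (rule hull_minimal) (use V in \<open>auto simp: convex_halfspace_le\<close>)
  then show ?thesis using g by blast
qed

theorem corollary1p2:
  fixes P :: "'a::euclidean_space set"
    and vtx :: "'a \<Rightarrow> 'a"
    and m :: nat
    and \<gamma> :: "nat \<Rightarrow> 'a"
    and w :: "nat \<Rightarrow> nat \<Rightarrow> real"
    and \<epsilon> :: "int \<Rightarrow> 'a"
  assumes "polytope P"
    and vtx_in: "\<And>x. vtx x \<in> {u. u extreme_point_of P}"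
    and vtx_closest: "\<And>x u. u extreme_point_of P \<Longrightarrow> norm (x - vtx x) \<le> norm (x - u)"
    and "m \<ge> 1"
    and \<gamma>_in: "\<And>k. k \<ge> 1 \<Longrightarrow> \<gamma> k \<in> P"
    and w_nonneg: "\<And>k i. i \<in> {1..m} \<Longrightarrow> w k i \<ge> 0"
    and w_sum: "\<And>k. (\<Sum>i=1..m. w k i) = 1"
    and rec: "\<And>k::nat. \<epsilon> (int k + 1) =
       (\<Sum>i=1..m. w k i *\<^sub>R \<epsilon> (int k + 1 - int i)) + \<gamma> (k + 1)
       - vtx ((\<Sum>i=1..m. w k i *\<^sub>R \<epsilon> (int k + 1 - int i)) + \<gamma> (k + 1))"
  shows "\<exists>B>0. \<forall>k::int. k \<ge> 1 - int m \<longrightarrow> norm (\<epsilon> k) < B"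
proof -
  define V where "V = {u. u extreme_point_of P}"
  have finV: "finite V"
    using finite_polyhedron_extreme_points[OF polytope_imp_polyhedron[OF assms(1)]] by (simp add: V_def)
  have PV: "P = convex hull V"
    using Krein_Milman_Minkowski[OF polytope_imp_compact[OF assms(1)] polytope_imp_convex[OF assms(1)]]
    by (simp add: V_def)
  have vtxV: "vtx x \<in> V" for x using vtx_in by (simp add: V_def)
  obtain Bd where Bd: "\<forall>x\<in>V. norm x \<le> Bd"
    using finite_imp_bounded[OF finV] by (auto simp: bounded_iff)
  define D where "D = 2 * \<bar>Bd\<bar> + 1"
  have D0: "D > 0" by (simp add: D_def)
  have DV: "\<forall>u\<in>V. \<forall>w\<in>V. norm (u - w) \<le> D"
  proof (intro ballI)
    fix u w assume "u \<in> V" "w \<in> V"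
    then have "norm u \<le> \<bar>Bd\<bar>" "norm w \<le> \<bar>Bd\<bar>" using Bd by force+
    moreover have "norm (u - w) \<le> norm u + norm w" by (rule norm_triangle_ineq4)
    ultimately show "norm (u - w) \<le> D" by (simp add: D_def)
  qed
  obtain C where C: "C > 0" "\<forall>W\<subseteq>V. hprop (Bset V W) C" using hoff_unif[OF finV] by blast
  define A where "A = 1 + 4 * C\<^sup>2 * D\<^sup>2"
  have A1: "1 \<le> A" by (simp add: A_def)
  have A2: "4 * C\<^sup>2 * D\<^sup>2 \<le> A - 1" by (simp add: A_def)
  define R0 where "R0 = 3 * C\<^sup>2 * D^4 + 3 * D\<^sup>2 + 1"
  define M where "M = card V"
  define \<Phi> where "\<Phi> = Phi V A"
  define L where "L = max (R0 + A ^ M) (Max ((\<lambda>j. \<Phi> (\<epsilon> j)) ` {1 - int m..0}))"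
  have init: "\<Phi> (\<epsilon> j) \<le> L" if "1 - int m \<le> j" "j \<le> 0" for j
  proof -
    have "\<Phi> (\<epsilon> j) \<le> Max ((\<lambda>j. \<Phi> (\<epsilon> j)) ` {1 - int m..0})"
      using that by (intro Max_ge) auto
    then show ?thesis by (simp add: L_def)
  qed
  have main: "\<forall>k. 1 - int m \<le> k \<longrightarrow> k \<le> int n \<longrightarrow> \<Phi> (\<epsilon> k) \<le> L" for n
  proof (induction n)
    case 0 then show ?case using init by auto
  next
    case (Suc n)
    show ?case
    proof (intro allI impI)
      fix k assume k1: "1 - int m \<le> k" and k2: "k \<le> int (Suc n)"
      show "\<Phi> (\<epsilon> k) \<le> L"
      proof (cases "k \<le> int n")
        case True then show ?thesis using Suc.IH k1 by blast
      next
        case False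
        then have kk: "k = int n + 1" using k2 by simp
        define a where "a = (\<Sum>i=1..m. w n i *\<^sub>R \<epsilon> (int n + 1 - int i))"
        define x where "x = a + \<gamma> (n + 1)"
        define v where "v = vtx x"
        have vV: "v \<in> V" by (simp add: v_def vtxV)
        have ek: "\<epsilon> k = x - v" using rec[of n] kk by (simp add: a_def x_def v_def)
        have prev: "\<Phi> (\<epsilon> (int n + 1 - int i)) \<le> L" if "i \<in> {1..m}" for i
          using Suc.IH that by auto
        show ?thesis
        proof (cases "norm (\<epsilon> k) < R0")
          case True
          have "\<Phi> (\<epsilon> k) \<le> norm (\<epsilon> k) + A ^ card V"
            unfolding \<Phi>_def by (rule Phi_upper[OF finV A1])
          also have "\<dots> \<le> R0 + A ^ M" using True by (simp add: M_def)
          also have "\<dots> \<le> L" by (simp add: L_def)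
          finally show ?thesis .
        next
          case False
          have ev: "\<forall>u\<in>V. inner (\<epsilon> k) (u - v) \<le> (norm (u - v))\<^sup>2 / 2"
          proof
            fix u assume uV: "u \<in> V"
            have "norm (x - v) \<le> norm (x - u)"
              using vtx_closest[of u x] uV by (simp add: V_def v_def)
            then have "(norm (x - v))\<^sup>2 \<le> (norm (x - u))\<^sup>2" by (simp add: power_mono)
            moreover have xu: "x - u = \<epsilon> k + (v - u)" using ek by (simp add: algebra_simps)
            have "(norm (x - u))\<^sup>2 = (norm (\<epsilon> k))\<^sup>2 + (norm (v - u))\<^sup>2 + 2 * inner (\<epsilon> k) (v - u)"
              unfolding xu by (rule sq_add_aux)
            moreover have "norm (v - u) = norm (u - v)" by (rule norm_minus_commute)
            moreover have "inner (\<epsilon> k) (v - u) = - inner (\<epsilon> k) (u - v)" by (simp add: inner_diff_right)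
            moreover have "x - v = \<epsilon> k" using ek by simp
            ultimately show "inner (\<epsilon> k) (u - v) \<le> (norm (u - v))\<^sup>2 / 2"
              by simp
          qed
          obtain W where W: "W \<subseteq> V" "v \<in> W" "val V A W (\<epsilon> k) = \<Phi> (\<epsilon> k)"
            using key[OF finV vV C(1) C(2) D0 DV A1 A2 ev] False by (auto simp: R0_def \<Phi>_def)
          obtain q where q: "q \<in> hcone (Bset V W)" "norm q \<le> 1"
              "inner (\<epsilon> k) q = norm (closest_point (hcone (Bset V W)) (\<epsilon> k))"
            using pr_attain by blast
          have Phik: "\<Phi> (\<epsilon> k) = inner (\<epsilon> k) q + A ^ card W"
            using W(3) q(3) by (simp add: val_def NC_def)
          have qNC: "q \<in> NC V W" using q(1) by (simp add: NC_def)
          have gv: "inner q (\<gamma> (n + 1)) \<le> inner q v"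
          proof (rule hull_le)
            show "\<gamma> (n + 1) \<in> convex hull V" using \<gamma>_in[of "n + 1"] PV by simp
            show "\<forall>u\<in>V. inner q u \<le> inner q v" using qNC W(2) by (simp add: NC_iff)
          qed
          have each: "inner (\<epsilon> (int n + 1 - int i)) q + A ^ card W \<le> L" if "i \<in> {1..m}" for i
          proof -
            have "inner (\<epsilon> (int n + 1 - int i)) q \<le> norm (closest_point (hcone (Bset V W)) (\<epsilon> (int n + 1 - int i)))"
              by (rule pr_upper[OF q(1) q(2)])
            then have "inner (\<epsilon> (int n + 1 - int i)) q + A ^ card W \<le> val V A W (\<epsilon> (int n + 1 - int i))"
              by (simp add: val_def NC_def)
            also have "\<dots> \<le> \<Phi> (\<epsilon> (int n + 1 - int i))" unfolding \<Phi>_def by (rule Phi_ge[OF finV W(1)])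
            also have "\<dots> \<le> L" by (rule prev[OF that])
            finally show ?thesis .
          qed
          have "inner (\<epsilon> k) q = (\<Sum>i=1..m. w n i * inner (\<epsilon> (int n + 1 - int i)) q) + inner (\<gamma> (n + 1) - v) q"
            using ek by (simp add: x_def a_def inner_sum_left inner_diff_left inner_add_left)
          moreover have "inner (\<gamma> (n + 1) - v) q \<le> 0" using gv by (simp add: inner_commute[of _ q] inner_diff_right)
          ultimately have "\<Phi> (\<epsilon> k) \<le> (\<Sum>i=1..m. w n i * inner (\<epsilon> (int n + 1 - int i)) q) + A ^ card W"
            using Phik by simp
          also have "\<dots> = (\<Sum>i=1..m. w n i * (inner (\<epsilon> (int n + 1 - int i)) q + A ^ card W))"
            using w_sum[of n] by (simp add: distrib_left sum.distrib sum_distrib_right[symmetric])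
          also have "\<dots> \<le> (\<Sum>i=1..m. w n i * L)"
            by (intro sum_mono mult_left_mono each w_nonneg)
          also have "\<dots> = L" using w_sum[of n] by (simp add: sum_distrib_right[symmetric])
          finally show ?thesis .
        qed
      qed
    qed
  qed
  have L0: "0 < L"
  proof -
    have "0 \<le> 3 * C\<^sup>2 * D^4 + 3 * D\<^sup>2" by simp
    moreover have "0 \<le> A ^ M" using A1 by simp
    ultimately have "0 < R0 + A ^ M" unfolding R0_def by linarith
    then show ?thesis by (simp add: L_def)
  qed
  show ?thesis
  proof (intro exI[of _ "L"] conjI allI impI)
    show "0 < L" by (rule L0)
    fix k :: int assume k: "1 - int m \<le> k"
    have "\<Phi> (\<epsilon> k) \<le> L" using main[of "nat k"] k by auto
    moreover have "norm (\<epsilon> k) + 1 \<le> \<Phi> (\<epsilon> k)" unfolding \<Phi>_def by (rule Phi_lower[OF finV])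
    ultimately show "norm (\<epsilon> k) < L" by simp
  qed
qed


end
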